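(* Let $S$ be a set, let $f:2^S\to 2^S$ be monotonic with respect to $\subseteq$, and let $\mathcal{W}\subseteq 2^S$ be a set of subsets of $S$ each of which is well-supported for $f$. Then $\bigcup\mathcal{W}$ is well-supported for $f$.
   Context: The Axiom of Choice is assumed. For a binary relation ${\prec}$ on $X$ and $x\in X$, $\prec^{-1}(x)=\{x'\in X\mid x'\prec x\}$. A pair $(X,\prec)$ is a support ordering for $f$ if $X\subseteq S$, ${\prec}\subseteq X\times X$, and $x\in f(\prec^{-1}(x))$ for every $x\in X$. A relation is well-founded if every nonempty subset $Y$ of its carrier has an element $y$ such that no $y'\in Y$, $y'\neq y$, satisfies $y'\prec y$. A set $X\subseteq S$ is well-supported for $f$ if there is a well-founded ${\prec}\subseteq X\times X$ such that $(X,\prec)$ is a support ordering for $f$. *)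

theory Defs
  imports Main
begin

definition pred_set :: "('a \<times> 'a) set \<Rightarrow> 'a \<Rightarrow> 'a set" where
  "pred_set r x = {x'. (x', x) \<in> r}"

definition support_ordering ::
  "'a set \<Rightarrow> ('a set \<Rightarrow> 'a set) \<Rightarrow> 'a set \<Rightarrow> ('a \<times> 'a) set \<Rightarrow> bool" where
  "support_ordering S f X r \<longleftrightarrow>
     X \<subseteq> S \<and> r \<subseteq> X \<times> X \<and> (\<forall>x\<in>X. x \<in> f (pred_set r x))"

definition wf_on_carrier :: "'a set \<Rightarrow> ('a \<times> 'a) set \<Rightarrow> bool" where
  "wf_on_carrier X r \<longleftrightarrow>
     (\<forall>Y. Y \<subseteq> X \<and> Y \<noteq> {} \<longrightarrow> (\<exists>y\<in>Y. \<forall>y'\<in>Y. y' \<noteq> y \<longrightarrow> (y', y) \<notin> r))"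

definition well_supported :: "'a set \<Rightarrow> ('a set \<Rightarrow> 'a set) \<Rightarrow> 'a set \<Rightarrow> bool" where
  "well_supported S f X \<longleftrightarrow>
     (\<exists>r. r \<subseteq> X \<times> X \<and> wf_on_carrier X r \<and> support_ordering S f X r)"

end

theory Submission
  imports Defs
begin

theorem lemma7:
  fixes S :: "'a set" and f :: "'a set \<Rightarrow> 'a set" and W :: "'a set set"
  assumes f_maps: "\<And>A. A \<subseteq> S \<Longrightarrow> f A \<subseteq> S"
    and f_mono: "\<And>A B. A \<subseteq> B \<Longrightarrow> B \<subseteq> S \<Longrightarrow> f A \<subseteq> f B"
    and W_ws: "\<And>X. X \<in> W \<Longrightarrow> well_supported S f X"
  shows "well_supported S f (\<Union>W)"
proof -
  obtain R :: "'a set rel" where R: "well_order_on UNIV R" using well_order_on by blast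
  define L where "L = R - Id"
  have wfL: "wf L" using R unfolding L_def well_order_on_def by blast
  have totL: "\<And>X Y. X \<noteq> Y \<Longrightarrow> (X, Y) \<in> L \<or> (Y, X) \<in> L"
    using R unfolding L_def well_order_on_def linear_order_on_def total_on_def by blast
  have irrL: "\<And>X. (X, X) \<notin> L" unfolding L_def by blast
  define rr where "rr X = (SOME r. r \<subseteq> X \<times> X \<and> wf_on_carrier X r \<and> support_ordering S f X r)" for X
  have rr: "rr X \<subseteq> X \<times> X \<and> wf_on_carrier X (rr X) \<and> support_ordering S f X (rr X)" if "X \<in> W" for X
    unfolding rr_def using W_ws[OF that] unfolding well_supported_def by (rule someI_ex)
  define P where "P x X = (X \<in> W \<and> x \<in> X \<and> (\<forall>Z\<in>W. x \<in> Z \<longrightarrow> (Z, X) \<notin> L))" for x X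
  define idx where "idx x = (SOME X. P x X)" for x
  have idx: "P x (idx x)" if "x \<in> \<Union>W" for x
  proof -
    have "\<exists>X. P x X"
    proof -
      from that obtain X0 where "X0 \<in> {Z\<in>W. x \<in> Z}" by blast
      from wfE_min[OF wfL this] obtain X where
        "X \<in> {Z\<in>W. x \<in> Z}" "\<And>Z. (Z, X) \<in> L \<Longrightarrow> Z \<notin> {Z\<in>W. x \<in> Z}" by blast
      then show ?thesis unfolding P_def by blast
    qed
    then show ?thesis unfolding idx_def by (rule someI_ex)
  qed
  define r where "r = {(x', x). x' \<in> \<Union>W \<and> x \<in> \<Union>W \<and>
     ((idx x', idx x) \<in> L \<or> (idx x' = idx x \<and> (x', x) \<in> rr (idx x)))}"
  have US: "\<Union>W \<subseteq> S"
  proof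
    fix x assume "x \<in> \<Union>W"
    then obtain X where "X \<in> W" "x \<in> X" by blast
    then show "x \<in> S" using rr[of X] unfolding support_ordering_def by blast
  qed
  have sub: "r \<subseteq> \<Union>W \<times> \<Union>W" unfolding r_def by blast
  have wfc: "wf_on_carrier (\<Union>W) r"
    unfolding wf_on_carrier_def
  proof (intro allI impI)
    fix Y assume Y: "Y \<subseteq> \<Union>W \<and> Y \<noteq> {}"
    then obtain y0 where "idx y0 \<in> idx ` Y" by blast
    from wfE_min[OF wfL this] obtain A where A: "A \<in> idx ` Y" "\<And>Z. (Z, A) \<in> L \<Longrightarrow> Z \<notin> idx ` Y" by blast
    define Y' where "Y' = {y\<in>Y. idx y = A}"
    have Y'ne: "Y' \<noteq> {}" using A(1) unfolding Y'_def by blast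
    have AW: "A \<in> W" and Y'A: "Y' \<subseteq> A" using A(1) idx Y unfolding Y'_def P_def by blast+
    from rr[OF AW] have "wf_on_carrier A (rr A)" by blast
    with Y'ne Y'A obtain y where y: "y \<in> Y'" "\<forall>y'\<in>Y'. y' \<noteq> y \<longrightarrow> (y', y) \<notin> rr A"
      unfolding wf_on_carrier_def by blast
    show "\<exists>y\<in>Y. \<forall>y'\<in>Y. y' \<noteq> y \<longrightarrow> (y', y) \<notin> r"
    proof (intro bexI ballI impI)
      show "y \<in> Y" using y Y'_def by blast
      fix y' assume "y' \<in> Y" "y' \<noteq> y"
      show "(y', y) \<notin> r"
      proof
        assume "(y', y) \<in> r"
        then have h: "(idx y', idx y) \<in> L \<or> (idx y' = idx y \<and> (y', y) \<in> rr (idx y))"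
          unfolding r_def by blast
        have iy: "idx y = A" using y(1) unfolding Y'_def by blast
        show False
        proof (cases "(idx y', idx y) \<in> L")
          case True then show False using A(2) iy \<open>y' \<in> Y\<close> by blast
        next
          case False
          then have "idx y' = A" "(y', y) \<in> rr A" using h iy by auto
          then show False using y(2) \<open>y' \<in> Y\<close> \<open>y' \<noteq> y\<close> unfolding Y'_def by blast
        qed
      qed
    qed
  qed
  have supp: "support_ordering S f (\<Union>W) r"
    unfolding support_ordering_def
  proof (intro conjI ballI)
    show "\<Union>W \<subseteq> S" by (rule US)
    show "r \<subseteq> \<Union>W \<times> \<Union>W" by (rule sub)
    fix x assume x: "x \<in> \<Union>W"
    define X where "X = idx x"
    have XW: "X \<in> W" and xX: "x \<in> X" using idx[OF x] unfolding X_def P_def by blast+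
    have rX: "rr X \<subseteq> X \<times> X" "x \<in> f (pred_set (rr X) x)"
      using rr[OF XW] xX unfolding support_ordering_def by blast+
    have "pred_set (rr X) x \<subseteq> pred_set r x"
    proof
      fix x' assume "x' \<in> pred_set (rr X) x"
      then have e: "(x', x) \<in> rr X" unfolding pred_set_def by blast
      then have x'X: "x' \<in> X" using rX by blast
      then have x'U: "x' \<in> \<Union>W" using XW by blast
      have "(X, idx x') \<notin> L" using idx[OF x'U] XW x'X unfolding P_def by blast
      then have "idx x' = X \<or> (idx x', X) \<in> L" using totL by blast
      then show "x' \<in> pred_set r x"
        unfolding pred_set_def r_def using x x'U e X_def by auto
    qed
    moreover have "pred_set r x \<subseteq> S" using sub US unfolding pred_set_def by blast
    ultimately have "f (pred_set (rr X) x) \<subseteq> f (pred_set r x)" by (rule f_mono)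
    then show "x \<in> f (pred_set r x)" using rX(2) by blast
  qed
  show ?thesis unfolding well_supported_def using sub wfc supp by blast
qed

end
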